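(* Let $p,q\ge2$ and $n\ge1$. If $A\in\Lambda_1(p,n)$ and $B\in\Lambda_1(q,n)$, then $A\times B\in\Lambda_1(p+q-2,n)$.
   Context: Let $I_n=\{1,\dots,n\}$. A $d$-dimensional matrix of order $n$ is a function $I_n^d\to\mathbb R$; write $a_{i_1\cdots i_d}=A(i_1,\dots,i_d)$. A line is the set of positions obtained by varying one coordinate and fixing the others. $\Lambda_1(d,n)$ is the set of $(0,1)$-valued $d$-dimensional matrices of order $n$ with exactly one $1$ in each line. For a $p$-dimensional $A$ and a $q$-dimensional $B$ of order $n$, the product $A\times B$ is the $(p+q-2)$-dimensional matrix of order $n$ with $(A\times B)_{i_1\cdots i_{p+q-2}}=\sum_{j=1}^n a_{i_1\cdots i_{p-1}j}\,b_{j i_p\cdots i_{p+q-2}}$. *)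

theory Defs
  imports Complex_Main
begin

text \<open>A d-dimensional matrix of order n is modelled as a function on index lists
  (only its values on lists of length d with entries in {1..n} matter).\<close>
type_synonym mat = "nat list \<Rightarrow> real"

definition idx :: "nat \<Rightarrow> nat \<Rightarrow> nat list set" where
  "idx d n = {is. length is = d \<and> set is \<subseteq> {1..n}}"

definition Lambda1 :: "nat \<Rightarrow> nat \<Rightarrow> mat set" where
  "Lambda1 d n = {A. (\<forall>is\<in>idx d n. A is = 0 \<or> A is = 1) \<and>
     (\<forall>is\<in>idx d n. \<forall>k<d. card {j\<in>{1..n}. A (is[k := j]) = 1} = 1)}"

definition mprod :: "nat \<Rightarrow> nat \<Rightarrow> mat \<Rightarrow> mat \<Rightarrow> mat" where
  "mprod p n A B = (\<lambda>is. \<Sum>j=1..n. A (take (p - 1) is @ [j]) * B (j # drop (p - 1) is))"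

end

theory Submission
  imports Defs
begin

lemma idx_upd: "xs \<in> idx d n \<Longrightarrow> j \<in> {1..n} \<Longrightarrow> xs[k := j] \<in> idx d n"
  unfolding idx_def using set_update_subset_insert by fastforce

lemma sum_single:
  fixes n :: nat
  assumes "{j\<in>{1..n}. g j = (1::real)} = {v}" and "\<forall>j\<in>{1..n}. g j = 0 \<or> g j = 1"
  shows "(\<Sum>j=1..n. g j * h j) = h v"
proof -
  have v: "v \<in> {1..n}" "g v = 1" using assms(1) by auto
  have "(\<Sum>j=1..n. g j * h j) = (\<Sum>j\<in>{v}. g j * h j)"
  proof (rule sum.mono_neutral_right)
    show "\<forall>i\<in>{1..n} - {v}. g i * h i = 0"
    proof
      fix i assume i: "i \<in> {1..n} - {v}"
      hence "g i \<noteq> 1" using assms(1) by auto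
      thus "g i * h i = 0" using assms(2) i by auto
    qed
  qed (use v in auto)
  thus ?thesis using v by simp
qed

lemma line_single:
  assumes "A \<in> Lambda1 d n" "xs \<in> idx d n" "k < d"
  shows "\<exists>v. {j\<in>{1..n}. A (xs[k := j]) = 1} = {v}"
  using assms unfolding Lambda1_def by (auto simp: card_1_singleton_iff)

theorem corollary3p6:
  fixes p q n :: nat and A B :: mat
  assumes "p \<ge> 2" and "q \<ge> 2" and "n \<ge> 1"
    and "A \<in> Lambda1 p n" and "B \<in> Lambda1 q n"
  shows "mprod p n A B \<in> Lambda1 (p + q - 2) n"
proof -
  have A01: "\<And>xs. xs \<in> idx p n \<Longrightarrow> A xs = 0 \<or> A xs = 1" using assms(4) unfolding Lambda1_def by auto
  have B01: "\<And>xs. xs \<in> idx q n \<Longrightarrow> B xs = 0 \<or> B xs = 1" using assms(5) unfolding Lambda1_def by auto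
  define F where "F a = (THE v. {j\<in>{1..n}. A (a @ [j]) = 1} = {v})" for a
  define G where "G b = (THE v. {j\<in>{1..n}. B (j # b) = 1} = {v})" for b
  have Fs: "{j\<in>{1..n}. A (a @ [j]) = 1} = {F a}" if a: "a \<in> idx (p - 1) n" for a
  proof -
    have "a @ [1] \<in> idx p n" using a assms(1,3) by (auto simp: idx_def)
    from line_single[OF assms(4) this, of "p - 1"] assms(1) a
    obtain v where "{j\<in>{1..n}. A ((a @ [1])[p - 1 := j]) = 1} = {v}" by auto
    moreover have "(a @ [1])[p - 1 := j] = a @ [j]" for j using a by (simp add: idx_def list_update_append)
    ultimately have "{j\<in>{1..n}. A (a @ [j]) = 1} = {v}" by simp
    thus ?thesis unfolding F_def by simp
  qed
  have Gs: "{j\<in>{1..n}. B (j # b) = 1} = {G b}" if b: "b \<in> idx (q - 1) n" for b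
  proof -
    have "1 # b \<in> idx q n" using b assms(2,3) by (auto simp: idx_def)
    from line_single[OF assms(5) this, of 0] assms(2)
    obtain v where "{j\<in>{1..n}. B ((1 # b)[0 := j]) = 1} = {v}" by auto
    hence "{j\<in>{1..n}. B (j # b) = 1} = {v}" by simp
    thus ?thesis unfolding G_def by simp
  qed
  have Fr: "F a \<in> {1..n}" "A (a @ [F a]) = 1" if "a \<in> idx (p - 1) n" for a
    using Fs[OF that] by auto
  have Fiff: "F a = v \<longleftrightarrow> A (a @ [v]) = 1" if "a \<in> idx (p - 1) n" "v \<in> {1..n}" for a v
  proof -
    have e: "v \<in> {j\<in>{1..n}. A (a @ [j]) = 1} \<longleftrightarrow> A (a @ [v]) = 1" using that(2) by simp
    have "v \<in> {j\<in>{1..n}. A (a @ [j]) = 1} \<longleftrightarrow> F a = v" unfolding Fs[OF that(1)] by auto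
    with e show ?thesis by simp
  qed
  have tk: "take (p - 1) is \<in> idx (p - 1) n" "drop (p - 1) is \<in> idx (q - 1) n"
    if "is \<in> idx (p + q - 2) n" for "is"
    using that assms(1,2) by (auto simp: idx_def dest: in_set_takeD in_set_dropD)
  have M: "mprod p n A B is = B (F (take (p - 1) is) # drop (p - 1) is)"
    if "is \<in> idx (p + q - 2) n" for "is"
  proof -
    let ?a = "take (p - 1) is"
    have "\<forall>j\<in>{1..n}. A (?a @ [j]) = 0 \<or> A (?a @ [j]) = 1"
      using tk[OF that] assms(1) by (intro ballI A01) (auto simp: idx_def)
    thus ?thesis unfolding mprod_def using sum_single[OF Fs[OF tk(1)[OF that]]] by simp
  qed
  have FB: "F a # b \<in> idx q n" if "a \<in> idx (p - 1) n" "b \<in> idx (q - 1) n" for a b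
    using Fr(1)[OF that(1)] that(2) assms(2) by (auto simp: idx_def)
  show ?thesis
    unfolding Lambda1_def
  proof (intro CollectI conjI ballI allI impI)
    fix "is" assume "is": "is \<in> idx (p + q - 2) n"
    show "mprod p n A B is = 0 \<or> mprod p n A B is = 1"
      using M[OF "is"] B01[OF FB[OF tk[OF "is"]]] by simp
  next
    fix "is" k assume "is": "is \<in> idx (p + q - 2) n" and k: "k < p + q - 2"
    let ?a = "take (p - 1) is" and ?b = "drop (p - 1) is"
    have len: "length is = p + q - 2" using "is" by (simp add: idx_def)
    show "card {j \<in> {1..n}. mprod p n A B (is[k := j]) = 1} = 1"
    proof (cases "k < p - 1")
      case True
      have "{j \<in> {1..n}. mprod p n A B (is[k := j]) = 1}
          = {j \<in> {1..n}. A ((?a @ [G ?b])[k := j]) = 1}"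
      proof (intro Collect_cong conj_cong refl)
        fix j assume j: "j \<in> {1..n}"
        have is': "is[k := j] \<in> idx (p + q - 2) n" using idx_upd[OF "is" j] .
        have ta: "take (p - 1) (is[k := j]) = ?a[k := j]" using True by (simp add: take_update_swap)
        have db: "drop (p - 1) (is[k := j]) = ?b" using True by simp
        have ea: "(?a @ [G ?b])[k := j] = ?a[k := j] @ [G ?b]"
        proof -
          have "k < length ?a" using True len assms(2) by simp
          thus ?thesis by (simp add: list_update_append1)
        qed
        have aj: "?a[k := j] \<in> idx (p - 1) n" using idx_upd[OF tk(1)[OF "is"] j] .
        have Gb: "G ?b \<in> {1..n}" using Gs[OF tk(2)[OF "is"]] by auto
        have "mprod p n A B (is[k := j]) = 1 \<longleftrightarrow> B (F (?a[k := j]) # ?b) = 1"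
          using M[OF is'] ta db by simp
        also have "\<dots> \<longleftrightarrow> F (?a[k := j]) = G ?b"
          using Gs[OF tk(2)[OF "is"]] Fr(1)[OF aj] by blast
        also have "\<dots> \<longleftrightarrow> A (?a[k := j] @ [G ?b]) = 1" using Fiff[OF aj Gb] .
        finally show "mprod p n A B (is[k := j]) = 1 \<longleftrightarrow> A ((?a @ [G ?b])[k := j]) = 1"
          using ea by simp
      qed
      moreover have "?a @ [G ?b] \<in> idx p n"
        using tk(1)[OF "is"] Gs[OF tk(2)[OF "is"]] assms(1) by (auto simp: idx_def)
      ultimately show ?thesis using assms(4) True assms(1) unfolding Lambda1_def by auto
    next
      case False
      let ?k = "k - (p - 1) + 1"
      have "{j \<in> {1..n}. mprod p n A B (is[k := j]) = 1}
          = {j \<in> {1..n}. B ((F ?a # ?b)[?k := j]) = 1}"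
      proof (intro Collect_cong conj_cong refl)
        fix j assume j: "j \<in> {1..n}"
        have is': "is[k := j] \<in> idx (p + q - 2) n" using idx_upd[OF "is" j] .
        have ta: "take (p - 1) (is[k := j]) = ?a" using False by simp
        have db: "drop (p - 1) (is[k := j]) = ?b[k - (p - 1) := j]" using False by (simp add: drop_update_swap)
        show "mprod p n A B (is[k := j]) = 1 \<longleftrightarrow> B ((F ?a # ?b)[?k := j]) = 1"
          using M[OF is'] ta db by simp
      qed
      moreover have "?k < q" using False k assms(1,2) by simp
      moreover have "card {j \<in> {1..n}. B ((F ?a # ?b)[?k := j]) = 1} = 1"
        using assms(5) FB[OF tk[OF "is"]] \<open>?k < q\<close> unfolding Lambda1_def by blast
      ultimately show ?thesis by simp
    qed
  qed
qed

end
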